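(* For a generalised numerical semigroup $S\subseteq\mathbb{N}^d$ with $\mathcal{H}(S)\neq\emptyset$, the following are equivalent: (i) $S$ is a Frobenius GNS, i.e. $F_\prec(S)$ is the same gap for every relaxed monomial order $\prec$; (ii) $\mathcal{H}(S)$ has a unique maximal element with respect to the natural partial order; (iii) $PF(S)$ has a unique maximal element with respect to the natural partial order.
   Context: $\mathbb{N}=\{0,1,2,\dots\}$. A generalised numerical semigroup (GNS) is a submonoid $S\subseteq\mathbb{N}^d$ whose complement $\mathcal{H}(S)=\mathbb{N}^d\setminus S$ (the gaps) is finite. Natural partial order: $x\le y$ iff $x^{(i)}\le y^{(i)}$ for all $i$. A relaxed monomial order is a total order $\prec$ on $\mathbb{N}^d$ with (i) $v\prec w\Rightarrow v\prec w+u$ for all $u\in\mathbb{N}^d$, (ii) $0\prec v$ for all $v\ne0$; $F_\prec(S)=\max_\prec\mathcal{H}(S)$. A gap $P$ is pseudo-Frobenius if $P+s\in S$ for every nonzero $s\in S$; $PF(S)$ is the set of pseudo-Frobenius gaps. *)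

theory Defs
  imports Main "HOL-Library.Function_Algebras"
begin

text \<open>Points of N^d are functions 'd \<Rightarrow> nat with 'd a finite index type (d = CARD('d)).
  Addition and zero are pointwise (Function_Algebras); the order \<le> on functions is the
  pointwise (natural partial) order from Main.\<close>

definition GNS :: "('d::finite \<Rightarrow> nat) set \<Rightarrow> bool" where
  "GNS S \<longleftrightarrow> 0 \<in> S \<and> (\<forall>x\<in>S. \<forall>y\<in>S. x + y \<in> S) \<and> finite (UNIV - S)"

definition gaps :: "('d::finite \<Rightarrow> nat) set \<Rightarrow> ('d \<Rightarrow> nat) set" where
  "gaps S = UNIV - S"

definition relaxed_monomial_order :: "(('d::finite \<Rightarrow> nat) \<Rightarrow> ('d \<Rightarrow> nat) \<Rightarrow> bool) \<Rightarrow> bool" where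
  "relaxed_monomial_order lt \<longleftrightarrow>
     (\<forall>v. \<not> lt v v) \<and>
     (\<forall>u v w. lt u v \<longrightarrow> lt v w \<longrightarrow> lt u w) \<and>
     (\<forall>v w. v \<noteq> w \<longrightarrow> lt v w \<or> lt w v) \<and>
     (\<forall>u v w. lt v w \<longrightarrow> lt v (w + u)) \<and>
     (\<forall>v. v \<noteq> 0 \<longrightarrow> lt 0 v)"

definition is_Frobenius_wrt :: "(('d::finite \<Rightarrow> nat) \<Rightarrow> ('d \<Rightarrow> nat) \<Rightarrow> bool) \<Rightarrow> ('d \<Rightarrow> nat) set \<Rightarrow> ('d \<Rightarrow> nat) \<Rightarrow> bool" where
  "is_Frobenius_wrt lt S F \<longleftrightarrow> F \<in> gaps S \<and> (\<forall>g\<in>gaps S. g \<noteq> F \<longrightarrow> lt g F)"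

definition Frobenius_GNS :: "('d::finite \<Rightarrow> nat) set \<Rightarrow> bool" where
  "Frobenius_GNS S \<longleftrightarrow> (\<exists>F. \<forall>lt. relaxed_monomial_order lt \<longrightarrow> is_Frobenius_wrt lt S F)"

definition PF :: "('d::finite \<Rightarrow> nat) set \<Rightarrow> ('d \<Rightarrow> nat) set" where
  "PF S = {P \<in> gaps S. \<forall>s\<in>S. s \<noteq> 0 \<longrightarrow> P + s \<in> S}"

definition maximal_elems :: "('d::finite \<Rightarrow> nat) set \<Rightarrow> ('d \<Rightarrow> nat) set" where
  "maximal_elems A = {m \<in> A. \<forall>x\<in>A. m \<le> x \<longrightarrow> x = m}"

definition has_unique_maximal :: "('d::finite \<Rightarrow> nat) set \<Rightarrow> bool" where
  "has_unique_maximal A \<longleftrightarrow> (\<exists>!m. m \<in> maximal_elems A)"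

end

theory Submission
  imports Defs "HOL-Library.Countable"
begin

lemma rmo_step:
  assumes "relaxed_monomial_order lt" "(g::'d::finite \<Rightarrow> nat) \<le> m" "g \<noteq> m"
  shows "lt g m"
proof -
  define u where "u = m - g"
  have u: "m = g + u" using assms(2) by (simp add: u_def fun_eq_iff le_fun_def)
  have tot: "\<forall>v w. v \<noteq> w \<longrightarrow> lt v w \<or> lt w v" and irr: "\<forall>v. \<not> lt v v"
    and add: "\<forall>u v w. lt v w \<longrightarrow> lt v (w + u)"
    using assms(1) unfolding relaxed_monomial_order_def by auto
  show ?thesis
  proof (rule ccontr)
    assume "\<not> lt g m"
    then have "lt m g" using tot assms(3) by blast
    then have "lt m (g + u)" using add by blast
    then show False using irr u by simp
  qed
qed

definition ord_i :: "'d \<Rightarrow> ('d::finite \<Rightarrow> nat) \<Rightarrow> ('d \<Rightarrow> nat) \<Rightarrow> bool" where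
  "ord_i i v w \<longleftrightarrow> v i < w i \<or> (v i = w i \<and> (sum v UNIV < sum w UNIV \<or>
     (sum v UNIV = sum w UNIV \<and> to_nat v < to_nat w)))"

lemma sum_strict:
  fixes w u :: "'d::finite \<Rightarrow> nat"
  assumes "u \<noteq> 0"
  shows "sum w UNIV < sum (w + u) UNIV"
proof -
  obtain j where "u j \<noteq> 0" using assms by (auto simp: fun_eq_iff)
  then have "sum w UNIV < sum (\<lambda>x. w x + u x) UNIV"
    by (intro sum_strict_mono_ex1) auto
  then show ?thesis by (simp add: plus_fun_def)
qed

lemma ord_i_rmo: "relaxed_monomial_order (ord_i i)"
  unfolding relaxed_monomial_order_def
proof (intro conjI allI impI)
  fix v :: "'a \<Rightarrow> nat" show "\<not> ord_i i v v" by (simp add: ord_i_def)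
next
  fix u v w :: "'a \<Rightarrow> nat" assume "ord_i i u v" "ord_i i v w"
  then show "ord_i i u w" unfolding ord_i_def by auto
next
  fix v w :: "'a \<Rightarrow> nat" assume "v \<noteq> w"
  then have "to_nat v \<noteq> to_nat w" by simp
  then show "ord_i i v w \<or> ord_i i w v" unfolding ord_i_def by auto
next
  fix u v w :: "'a \<Rightarrow> nat" assume h: "ord_i i v w"
  show "ord_i i v (w + u)"
  proof (cases "u = 0")
    case True then show ?thesis using h by simp
  next
    case False
    have s: "sum w UNIV < sum (w + u) UNIV" using sum_strict[OF False] .
    have s2: "sum v UNIV \<le> sum w UNIV \<or> v i < w i" using h unfolding ord_i_def by auto
    show ?thesis using h s s2 unfolding ord_i_def by (auto simp: plus_fun_def)
  qed
next
  fix v :: "'a \<Rightarrow> nat" assume "v \<noteq> 0"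
  then have "sum 0 UNIV < sum (0 + v) UNIV" using sum_strict[of v 0] by simp
  then show "ord_i i 0 v" unfolding ord_i_def by auto
qed

lemma below_max:
  assumes "finite A" "(x::'d::finite \<Rightarrow> nat) \<in> A"
  shows "\<exists>m\<in>maximal_elems A. x \<le> m"
  using finite_has_maximal2[OF assms] unfolding maximal_elems_def by fastforce

lemma max_PF:
  assumes "GNS S"
  shows "maximal_elems (PF S) = maximal_elems (gaps S)"
proof -
  have fin: "finite (gaps S)" using assms by (simp add: GNS_def gaps_def)
  have sub: "PF S \<subseteq> gaps S" by (auto simp: PF_def)
  have mPF: "m \<in> PF S" if "m \<in> maximal_elems (gaps S)" for m
  proof -
    have mg: "m \<in> gaps S" and mx: "\<forall>x\<in>gaps S. m \<le> x \<longrightarrow> x = m"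
      using that by (auto simp: maximal_elems_def)
    have "m + s \<in> S" if "s \<in> S" "s \<noteq> 0" for s
    proof (rule ccontr)
      assume "m + s \<notin> S"
      then have "m + s \<in> gaps S" by (simp add: gaps_def)
      moreover have "m \<le> m + s" by (simp add: le_fun_def)
      ultimately have "m + s = m" using mx by blast
      then have "s = 0" by (simp add: fun_eq_iff plus_fun_def)
      then show False using that by simp
    qed
    then show ?thesis using mg by (simp add: PF_def)
  qed
  show ?thesis
  proof
    show "maximal_elems (PF S) \<subseteq> maximal_elems (gaps S)"
    proof
      fix m assume m: "m \<in> maximal_elems (PF S)"
      then have "m \<in> gaps S" using sub by (auto simp: maximal_elems_def)
      then obtain g where g: "g \<in> maximal_elems (gaps S)" "m \<le> g" using below_max fin by blast
      then have "g \<in> PF S" using mPF by blast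
      then have "g = m" using m g(2) by (auto simp: maximal_elems_def)
      then show "m \<in> maximal_elems (gaps S)" using g by simp
    qed
  next
    show "maximal_elems (gaps S) \<subseteq> maximal_elems (PF S)"
      using mPF sub by (auto simp: maximal_elems_def)
  qed
qed

theorem mainTheorem2:
  fixes S :: "('d::finite \<Rightarrow> nat) set"
  assumes "GNS S" and "gaps S \<noteq> {}"
  shows "(Frobenius_GNS S \<longleftrightarrow> has_unique_maximal (gaps S)) \<and>
         (has_unique_maximal (gaps S) \<longleftrightarrow> has_unique_maximal (PF S))"
proof
  have fin: "finite (gaps S)" using assms by (simp add: GNS_def gaps_def)
  obtain x where x: "x \<in> gaps S" using assms(2) by blast
  show "Frobenius_GNS S \<longleftrightarrow> has_unique_maximal (gaps S)"
  proof
    assume "Frobenius_GNS S"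
    then obtain F where F: "\<And>lt. relaxed_monomial_order lt \<Longrightarrow> is_Frobenius_wrt lt S F"
      unfolding Frobenius_GNS_def by blast
    have Fg: "F \<in> gaps S" using F[OF ord_i_rmo] by (simp add: is_Frobenius_wrt_def)
    have eq: "m = F" if m: "m \<in> maximal_elems (gaps S)" for m
    proof (rule ccontr)
      assume ne: "m \<noteq> F"
      have "\<not> m \<le> F" using m Fg ne by (auto simp: maximal_elems_def)
      then obtain i where i: "F i < m i" by (auto simp: le_fun_def not_le)
      have "ord_i i m F" using F[OF ord_i_rmo] m ne by (auto simp: is_Frobenius_wrt_def maximal_elems_def)
      then show False using i by (auto simp: ord_i_def)
    qed
    obtain m where "m \<in> maximal_elems (gaps S)" using below_max[OF fin x] by blast
    then show "has_unique_maximal (gaps S)" unfolding has_unique_maximal_def using eq by blast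
  next
    assume "has_unique_maximal (gaps S)"
    then obtain m where m: "m \<in> maximal_elems (gaps S)" and u: "\<And>m'. m' \<in> maximal_elems (gaps S) \<Longrightarrow> m' = m"
      unfolding has_unique_maximal_def by blast
    have "is_Frobenius_wrt lt S m" if "relaxed_monomial_order lt" for lt
      unfolding is_Frobenius_wrt_def
    proof (intro conjI ballI impI)
      show "m \<in> gaps S" using m by (simp add: maximal_elems_def)
    next
      fix g assume "g \<in> gaps S" "g \<noteq> m"
      then show "lt g m" using below_max[OF fin] u rmo_step[OF that] by metis
    qed
    then show "Frobenius_GNS S" unfolding Frobenius_GNS_def by blast
  qed
next
  show "has_unique_maximal (gaps S) \<longleftrightarrow> has_unique_maximal (PF S)"
    unfolding has_unique_maximal_def using max_PF[OF assms(1)] by simp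
qed

end
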